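(* Let $g\ge2$, $q=2g+1$, $\zeta=\exp(2\pi\sqrt{-1}/q)$. For $i=1,\dots,g$ let $\omega_i=\eta_i/B(i/q,i/q)$ where $\eta_i=dx/y^{q-i}$ on $C_{q,1}$, and let $\Omega_A=(\int_{A_j}\omega_i)_{i,j}$, $\Omega_B=(\int_{B_j}\omega_i)_{i,j}$ ($1\le i,j\le g$). Then $$\Omega_A=-\operatorname{diag}(-1+\zeta^i)\,\operatorname{diag}(\zeta^i)\,\big(\zeta^{2i(j-1)}\big)_{i,j},\qquad \Omega_B=\operatorname{diag}(-1+\zeta^i)\Big(\sum_{k=0}^{j-1}\zeta^{2ik}\Big)_{i,j}.$$
   Context: $C_{q,1}$ is the compact Riemann surface of $y^q=x(1-x)$ (genus $g$); $\{\eta_i\}$ is a basis of holomorphic 1-forms; $B(u,v)=\int_0^1t^{u-1}(1-t)^{v-1}dt$. $\sigma(x,y)=(x,\zeta y)$, $I_0(t)=(t,\sqrt[q]{t(1-t)})$, $c_j$ the class of $I_0\cdot(\sigma^j\circ I_0)^{-1}$. In coordinates $z=4^{1/q}y$, $w=-\sqrt{-1}(2x-1)$ (so $w^2=z^q-1$), $\gamma_k(t)=(\zeta^k 2t,\sqrt{-1}\sqrt{1-(2t)^q})$ for $0\le t\le 1/2$ and $(\zeta^k(2-2t),-\sqrt{-1}\sqrt{1-(2-2t)^q})$ for $1/2\le t\le1$; $A_i=\gamma_{2i-1}\cdot\gamma_{2i}^{-1}$, $B_i=\gamma_{2i-1}\cdot\gamma_{2i-2}^{-1}\cdots\gamma_1\cdot\gamma_0^{-1}$,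 forming a symplectic basis of $H_1(C_{q,1};\mathbb Z)$. $\operatorname{diag}(d_i)$ is the diagonal matrix with $(i,i)$-entry $d_i$. *)

theory Defs
  imports "HOL-Analysis.Analysis"
begin

text \<open>Points of the affine curve y^q = x(1-x) are represented as pairs (x,y) of complex numbers.\<close>

definition zeta :: "nat \<Rightarrow> complex" where
  "zeta q = exp (2 * of_real pi * \<i> / of_nat q)"

text \<open>The path gamma_k in the coordinates (z,w) with w^2 = z^q - 1.\<close>
definition gamma_zw :: "nat \<Rightarrow> nat \<Rightarrow> real \<Rightarrow> complex \<times> complex" where
  "gamma_zw q k t =
     (if t \<le> 1/2
      then (zeta q ^ k * of_real (2 * t), \<i> * of_real (sqrt (1 - (2 * t) ^ q)))
      else (zeta q ^ k * of_real (2 - 2 * t), - \<i> * of_real (sqrt (1 - (2 - 2 * t) ^ q))))"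

text \<open>Change of coordinates: z = 4^(1/q) y, w = -i(2x-1), i.e. x = (1 + i w)/2, y = z / 4^(1/q).\<close>
definition zw_to_xy :: "nat \<Rightarrow> complex \<times> complex \<Rightarrow> complex \<times> complex" where
  "zw_to_xy q p = ((1 + \<i> * snd p) / 2, fst p / of_real (root q 4))"

definition gamma_path :: "nat \<Rightarrow> nat \<Rightarrow> real \<Rightarrow> complex \<times> complex" where
  "gamma_path q k = zw_to_xy q \<circ> gamma_zw q k"

definition loop_path :: "nat \<Rightarrow> nat \<Rightarrow> nat \<Rightarrow> real \<Rightarrow> complex \<times> complex" where
  "loop_path q a b = gamma_path q a +++ reversepath (gamma_path q b)"

definition A_path :: "nat \<Rightarrow> nat \<Rightarrow> real \<Rightarrow> complex \<times> complex" where
  "A_path q i = loop_path q (2 * i - 1) (2 * i)"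

text \<open>B_i = gamma_{2i-1} . gamma_{2i-2}^{-1} ... gamma_1 . gamma_0^{-1} (defined for i >= 1).\<close>
fun B_path :: "nat \<Rightarrow> nat \<Rightarrow> real \<Rightarrow> complex \<times> complex" where
  "B_path q 0 = (\<lambda>t. (0, 0))"
| "B_path q (Suc 0) = loop_path q 1 0"
| "B_path q (Suc (Suc n)) = loop_path q (2 * n + 3) (2 * n + 2) +++ B_path q (Suc n)"

definition dx_integral :: "(complex \<times> complex \<Rightarrow> complex) \<Rightarrow> (real \<Rightarrow> complex \<times> complex) \<Rightarrow> complex" where
  "dx_integral f p = integral {0..1} (\<lambda>t. f (p t) * vector_derivative (\<lambda>s. fst (p s)) (at t))"

text \<open>omega_i = eta_i / B(i/q, i/q), eta_i = dx / y^(q-i); we record the coefficient of dx.\<close>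
definition omega :: "nat \<Rightarrow> nat \<Rightarrow> complex \<times> complex \<Rightarrow> complex" where
  "omega q i p = 1 / (snd p ^ (q - i) * of_real (Beta (real i / real q) (real i / real q)))"

end

theory Submission
  imports Defs
begin


lemma lborel_int_of_abs:
  fixes f :: "real \<Rightarrow> real"
  assumes "f absolutely_integrable_on {a..b}" "f \<in> borel_measurable borel"
  shows "set_integrable lborel {a..b} f"
proof -
  have m: "(\<lambda>x. indicator {a..b} x *\<^sub>R f x) \<in> borel_measurable lborel"
    using assms(2) by measurable
  show ?thesis using assms(1) unfolding set_integrable_def
    using integrable_completion[OF m] by simp
qed

lemma K_integral:
  fixes i q :: nat
  assumes "1 \<le> i" "i < q"
  shows "((\<lambda>s::real. s^(i-1) / sqrt (1 - s^q)) has_integral Beta (i/q) (1/2) / q) {0..1}"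
proof -
  define a where "a = real i / real q"
  have a0: "a > 0" using assms by (simp add: a_def)
  define f where "f = (\<lambda>v::real. v powr (a - 1) * (1 - v) powr (1/2 - 1) / q)"
  have hB: "(f has_integral Beta a (1/2) / q) {0..1}"
    unfolding f_def using has_integral_Beta_real[OF a0, of "1/2"]
    by (intro has_integral_divide) simp_all
  have fabs: "f absolutely_integrable_on {0..1}"
    by (rule nonnegative_absolutely_integrable_1) (use hB in \<open>auto simp: f_def integrable_on_def\<close>)
  have fm: "f \<in> borel_measurable borel" unfolding f_def by measurable
  have fint0: "set_integrable lborel {0..1} f"
    using lborel_int_of_abs[OF fabs fm] .
  have q0: "(0::real)^q = 0" using assms by (simp add: power_0_left)
  have fint: "set_integrable lborel {(\<lambda>s::real. s^q) 0..(\<lambda>s::real. s^q) 1} f"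
    unfolding q0 power_one by (rule fint0)
  have der: "\<And>x. x \<in> {0..1} \<Longrightarrow> ((\<lambda>s::real. s^q) has_real_derivative (real q * x^(q-1))) (at x)"
    by (auto intro!: derivative_eq_intros)
  have cont: "continuous_on {0..1} (\<lambda>x::real. real q * x^(q-1))" by (intro continuous_intros)
  note sub = integral_substitution[OF fint der cont _ zero_le_one]
  have si: "set_integrable lborel {0..1} (\<lambda>x. f (x^q) * (real q * x^(q-1)))"
    using sub(1) by simp
  have eq: "(LBINT x. f x * indicator {0..1} x) = (LBINT x. f (x^q) * (real q * x^(q-1)) * indicator {0..1} x)"
    using sub(2) unfolding q0 power_one by simp
  have "(LINT x:{0..1}|lborel. f x) = integral {0..1} f"
    using set_borel_integral_eq_integral(2)[OF fint0] by simp
  also have "\<dots> = Beta a (1/2) / q" using hB by (simp add: integral_unique)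
  finally have e1: "(LINT x:{0..1}|lborel. f x) = Beta a (1/2) / q" .
  have "(LINT x:{0..1}|lborel. f (x^q) * (real q * x^(q-1))) = (LINT x:{0..1}|lborel. f x)"
    using eq unfolding set_lebesgue_integral_def by (simp add: mult.commute)
  hence "integral {0..1} (\<lambda>x. f (x^q) * (real q * x^(q-1))) = Beta a (1/2) / q"
    using set_borel_integral_eq_integral(2)[OF si] e1 by simp
  moreover have "(\<lambda>x. f (x^q) * (real q * x^(q-1))) integrable_on {0..1}"
    using set_borel_integral_eq_integral(1)[OF si] .
  ultimately have h: "((\<lambda>x. f (x^q) * (real q * x^(q-1))) has_integral Beta a (1/2) / q) {0..1}"
    by (metis has_integral_integral)
  show ?thesis
  proof (rule has_integral_spike_finite[OF _ _ h[unfolded a_def]])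
    show "finite {0::real,1}" by simp
    fix s :: real assume s: "s \<in> {0..1} - {0,1}"
    hence s0: "0 < s" "s < 1" by auto
    have sq: "s^q < 1" using s0 assms by (simp add: power_less_one_iff)
    have "(s^q) powr (a-1) * s^(q-1) = s powr (real q * (a-1) + real (q-1))"
      using s0 by (simp add: powr_powr [symmetric] powr_realpow powr_add)
    also have "real q * (a-1) + real (q-1) = real (i-1)" using assms by (simp add: a_def field_simps of_nat_diff)
    finally have p1: "(s^q) powr (a-1) * s^(q-1) = s^(i-1)" using s0 by (simp add: powr_realpow)
    have p2: "(1 - s^q) powr (1/2 - 1) = 1 / sqrt (1 - s^q)"
      using sq by (simp add: powr_minus_divide powr_half_sqrt [symmetric])
    show "s^(i-1) / sqrt (1 - s^q) = f (s^q) * (real q * s^(q-1))"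
      using assms p1 p2 unfolding f_def by (simp add: a_def field_simps)
  qed
qed



definition good :: "(complex \<times> complex \<Rightarrow> complex) \<Rightarrow> (real \<Rightarrow> complex \<times> complex) \<Rightarrow> complex \<Rightarrow> bool" where
  "good f p I \<longleftrightarrow> (\<exists>S. finite S \<and> (\<forall>t\<in>{0<..<1}-S. (\<lambda>s. fst (p s)) differentiable (at t)))
     \<and> ((\<lambda>t. f (p t) * vector_derivative (\<lambda>s. fst (p s)) (at t)) has_integral I) {0..1}"

lemma aff_int:
  fixes h :: "real \<Rightarrow> complex"
  assumes "(h has_integral I) {0..1}" "m \<noteq> 0"
  shows "((\<lambda>x. h (m * x + c)) has_integral (1/\<bar>m\<bar>) *\<^sub>R I) ((\<lambda>x. x/m - c/m) ` {0..1})"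
  using has_integral_affinity[of h I 0 1 m c] assms by (simp add: field_simps)

lemma good_reverse:
  assumes "good f p I"
  shows "good f (reversepath p) (- I)"
proof -
  obtain S where S: "finite S" "\<And>t. t\<in>{0<..<1}-S \<Longrightarrow> (\<lambda>s. fst (p s)) differentiable (at t)"
    and hI: "((\<lambda>t. f (p t) * vector_derivative (\<lambda>s. fst (p s)) (at t)) has_integral I) {0..1}"
    using assms unfolding good_def by blast
  define S' where "S' = (\<lambda>x. 1 - x) ` S"
  have der: "((\<lambda>s. fst (reversepath p s)) has_vector_derivative
               - vector_derivative (\<lambda>s. fst (p s)) (at (1 - t))) (at t)"
    if "t \<in> {0<..<1} - S'" for t
  proof -
    have "1 - t \<in> {0<..<1} - S" using that by (auto simp: S'_def image_iff)
    hence d: "((\<lambda>s. fst (p s)) has_vector_derivative vector_derivative (\<lambda>s. fst (p s)) (at (1 - t))) (at (1 - t))"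
      using S(2) vector_derivative_works by blast
    have d2: "((\<lambda>s::real. 1 - s) has_vector_derivative -1) (at t)"
      by (auto intro!: derivative_eq_intros)
    have "(((\<lambda>s. fst (p s)) \<circ> (\<lambda>s. 1 - s)) has_vector_derivative (-1) *\<^sub>R vector_derivative (\<lambda>s. fst (p s)) (at (1 - t))) (at t)"
      by (rule vector_diff_chain_at[OF d2]) (use d in simp)
    thus ?thesis by (simp add: reversepath_def o_def)
  qed
  show ?thesis unfolding good_def
  proof (intro conjI exI[of _ S'])
    show "finite S'" using S(1) by (simp add: S'_def)
    show "\<forall>t\<in>{0<..<1} - S'. (\<lambda>s. fst (reversepath p s)) differentiable (at t)"
      using der differentiable_def has_vector_derivative_def by blast
    have h: "((\<lambda>x. f (p (-1 * x + 1)) * vector_derivative (\<lambda>s. fst (p s)) (at (-1 * x + 1)))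
               has_integral I) {0..1}"
    proof -
      have "(\<lambda>x::real. x / -1 - 1 / -1) ` {0..1} = {0..1}"
        using image_affinity_atLeastAtMost[of "-1" 1 0 1] by (simp add: algebra_simps)
      thus ?thesis using aff_int[OF hI, of "-1" 1] by simp
    qed
    show "((\<lambda>t. f (reversepath p t) * vector_derivative (\<lambda>s. fst (reversepath p s)) (at t)) has_integral - I) {0..1}"
    proof (rule has_integral_spike_finite[of "S' \<union> {0,1}"])
      show "finite (S' \<union> {0,1})" using S(1) by (simp add: S'_def)
      show "((\<lambda>x. - (f (p (-1 * x + 1)) * vector_derivative (\<lambda>s. fst (p s)) (at (-1 * x + 1)))) has_integral - I) {0..1}"
        using has_integral_neg[OF h] by simp
      fix t assume "t \<in> {0..1} - (S' \<union> {0,1})"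
      hence "t \<in> {0<..<1} - S'" by auto
      from vector_derivative_at[OF der[OF this]]
      show "f (reversepath p t) * vector_derivative (\<lambda>s. fst (reversepath p s)) (at t) =
            - (f (p (-1 * t + 1)) * vector_derivative (\<lambda>s. fst (p s)) (at (-1 * t + 1)))"
        by (simp add: reversepath_def)
    qed
  qed
qed

lemma good_join:
  assumes g1: "good f p1 I1" and g2: "good f p2 I2"
  shows "good f (p1 +++ p2) (I1 + I2)"
proof -
  obtain S1 where S1: "finite S1" "\<And>t. t\<in>{0<..<1}-S1 \<Longrightarrow> (\<lambda>s. fst (p1 s)) differentiable (at t)"
    and h1: "((\<lambda>t. f (p1 t) * vector_derivative (\<lambda>s. fst (p1 s)) (at t)) has_integral I1) {0..1}"
    using g1 unfolding good_def by blast
  obtain S2 where S2: "finite S2" "\<And>t. t\<in>{0<..<1}-S2 \<Longrightarrow> (\<lambda>s. fst (p2 s)) differentiable (at t)"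
    and h2: "((\<lambda>t. f (p2 t) * vector_derivative (\<lambda>s. fst (p2 s)) (at t)) has_integral I2) {0..1}"
    using g2 unfolding good_def by blast
  define S where "S = (\<lambda>x. x/2) ` S1 \<union> (\<lambda>x. (x+1)/2) ` S2 \<union> {0, 1/2, 1}"
  have finS: "finite S" using S1(1) S2(1) by (simp add: S_def)
  define v1 where "v1 = (\<lambda>t. vector_derivative (\<lambda>s. fst (p1 s)) (at t))"
  define v2 where "v2 = (\<lambda>t. vector_derivative (\<lambda>s. fst (p2 s)) (at t))"
  have derA: "((\<lambda>s. fst ((p1 +++ p2) s)) has_vector_derivative 2 * v1 (2*t)) (at t)"
    if "t \<in> {0<..<1/2}" "t \<notin> S" for t
  proof -
    have "2*t \<in> {0<..<1} - S1" using that by (auto simp: S_def image_iff mult.commute)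
    hence d: "((\<lambda>s. fst (p1 s)) has_vector_derivative v1 (2*t)) (at (2*t))"
      using S1(2) vector_derivative_works unfolding v1_def by blast
    have d2: "((\<lambda>s. 2*(s::real)) has_vector_derivative 2) (at t)"
      by (auto intro!: derivative_eq_intros)
    have "(((\<lambda>s. fst (p1 s)) \<circ> (\<lambda>s. 2*(s::real))) has_vector_derivative 2 *\<^sub>R v1 (2*t)) (at t)"
      by (rule vector_diff_chain_at[OF d2]) (use d in simp)
    hence "((\<lambda>s. fst (p1 (2 * s))) has_vector_derivative 2 * v1 (2*t)) (at t)"
      by (simp add: o_def scaleR_conv_of_real)
    thus ?thesis
      by (rule has_vector_derivative_transform_within_open[of _ _ _ "{..<1/2}"])
         (use that in \<open>auto simp: joinpaths_def\<close>)
  qed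
  have derB: "((\<lambda>s. fst ((p1 +++ p2) s)) has_vector_derivative 2 * v2 (2*t - 1)) (at t)"
    if "t \<in> {1/2<..<1}" "t \<notin> S" for t
  proof -
    have "2*t-1 \<in> {0<..<1} - S2" using that
      by (auto simp: S_def image_iff)
    hence d: "((\<lambda>s. fst (p2 s)) has_vector_derivative v2 (2*t-1)) (at (2*t-1))"
      using S2(2) vector_derivative_works unfolding v2_def by blast
    have d2: "((\<lambda>s. 2*(s::real)-1) has_vector_derivative 2) (at t)"
      by (auto intro!: derivative_eq_intros)
    have "(((\<lambda>s. fst (p2 s)) \<circ> (\<lambda>s. 2*(s::real)-1)) has_vector_derivative 2 *\<^sub>R v2 (2*t-1)) (at t)"
      by (rule vector_diff_chain_at[OF d2]) (use d in simp)
    hence "((\<lambda>s. fst (p2 (2 * s - 1))) has_vector_derivative 2 * v2 (2*t-1)) (at t)"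
      by (simp add: o_def scaleR_conv_of_real)
    thus ?thesis
      by (rule has_vector_derivative_transform_within_open[of _ _ _ "{1/2<..}"])
         (use that in \<open>auto simp: joinpaths_def\<close>)
  qed
  have iA: "((\<lambda>x. 2 * (f (p1 (2 * x + 0)) * v1 (2 * x + 0))) has_integral I1) {0..1/2}"
  proof -
    have "(\<lambda>x::real. x / 2 - 0 / 2) ` {0..1} = {0..1/2}"
      using image_affinity_atLeastAtMost[of "1/2" 0 0 1] by (simp add: algebra_simps)
    hence "((\<lambda>x. f (p1 (2 * x + 0)) * v1 (2 * x + 0)) has_integral (1/2) *\<^sub>R I1) {0..1/2}"
      using aff_int[OF h1, of 2 0] by (simp add: v1_def)
    from has_integral_mult_right[OF this, of 2] show ?thesis by (simp add: scaleR_conv_of_real)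
  qed
  have iB: "((\<lambda>x. 2 * (f (p2 (2 * x + -1)) * v2 (2 * x + -1))) has_integral I2) {1/2..1}"
  proof -
    have "(\<lambda>x::real. x / 2 - -1 / 2) ` {0..1} = {1/2..1}"
      using image_affinity_atLeastAtMost[of "1/2" "1/2" 0 1] by (simp add: algebra_simps)
    hence "((\<lambda>x. f (p2 (2 * x + -1)) * v2 (2 * x + -1)) has_integral (1/2) *\<^sub>R I2) {1/2..1}"
      using aff_int[OF h2, of 2 "-1"] by (simp add: v2_def)
    from has_integral_mult_right[OF this, of 2] show ?thesis by (simp add: scaleR_conv_of_real)
  qed
  let ?F = "\<lambda>t. f ((p1 +++ p2) t) * vector_derivative (\<lambda>s. fst ((p1 +++ p2) s)) (at t)"
  have iA': "(?F has_integral I1) {0..1/2}"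
  proof (rule has_integral_spike_finite[OF finS _ iA])
    fix t assume t: "t \<in> {0..1/2} - S"
    hence "t \<in> {0<..<1/2}" "t \<notin> S" by (auto simp: S_def)
    from vector_derivative_at[OF derA[OF this]] t
    show "?F t = 2 * (f (p1 (2 * t + 0)) * v1 (2 * t + 0))"
      by (simp add: joinpaths_def)
  qed
  have iB': "(?F has_integral I2) {1/2..1}"
  proof (rule has_integral_spike_finite[OF finS _ iB])
    fix t assume t: "t \<in> {1/2..1} - S"
    hence "t \<in> {1/2<..<1}" "t \<notin> S" by (auto simp: S_def)
    from vector_derivative_at[OF derB[OF this]] this
    show "?F t = 2 * (f (p2 (2 * t + -1)) * v2 (2 * t + -1))"
      by (simp add: joinpaths_def)
  qed
  show ?thesis unfolding good_def
  proof (intro conjI exI[of _ S])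
    show "finite S" by (rule finS)
    show "\<forall>t\<in>{0<..<1} - S. (\<lambda>s. fst ((p1 +++ p2) s)) differentiable (at t)"
    proof
      fix t assume t: "t \<in> {0<..<1} - S"
      show "(\<lambda>s. fst ((p1 +++ p2) s)) differentiable (at t)"
      proof (cases "t < 1/2")
        case True thus ?thesis using derA[of t] t differentiable_def has_vector_derivative_def by fastforce
      next
        case False
        hence "t > 1/2" using t by (auto simp: S_def)
        thus ?thesis using derB[of t] t differentiable_def has_vector_derivative_def by fastforce
      qed
    qed
    show "(?F has_integral I1 + I2) {0..1}"
      by (rule has_integral_combine[OF _ _ iA' iB']) auto
  qed
qed



lemma legendre_real:
  fixes a :: real assumes "a > 0"
  shows "Gamma a * Gamma (a + 1/2) = 2 powr (1 - 2*a) * sqrt pi * Gamma (2*a)"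
proof -
  have n1: "complex_of_real a \<notin> \<int>\<^sub>\<le>\<^sub>0" using assms
    by (auto simp: of_real_in_nonpos_Ints_iff dest: nonpos_Ints_nonpos)
  have n2: "complex_of_real a + 1/2 \<notin> \<int>\<^sub>\<le>\<^sub>0" using assms
  proof -
    have "complex_of_real a + 1/2 = complex_of_real (a + 1/2)" by simp
    moreover have "a + 1/2 \<notin> \<int>\<^sub>\<le>\<^sub>0" using assms by (auto dest: nonpos_Ints_nonpos)
    ultimately show ?thesis by (metis of_real_in_nonpos_Ints_iff)
  qed
  from Gamma_legendre_duplication[OF n1 n2]
  have "complex_of_real (Gamma a * Gamma (a + 1/2)) = complex_of_real (exp ((1 - 2*a) * ln 2) * sqrt pi * Gamma (2*a))"
    by (simp only: of_real_mult of_real_exp of_real_diff of_real_1 of_real_numeral Gamma_complex_of_real[symmetric] of_real_add of_real_divide)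
  hence "Gamma a * Gamma (a + 1/2) = exp ((1 - 2*a) * ln 2) * sqrt pi * Gamma (2*a)"
    using of_real_eq_iff by blast
  thus ?thesis by (simp add: powr_def)
qed


lemma beta_identity:
  fixes a :: real assumes "a > 0"
  shows "2 powr (2*a) * Beta a a = 2 * Beta a (1/2)"
proof -
  have L: "Gamma a * Gamma (a + 1/2) = 2 powr (1 - 2*a) * sqrt pi * Gamma (2*a)"
    by (rule legendre_real[OF assms])
  have PQ: "2 powr (2*a) * 2 powr (1 - 2*a) = (2::real)"
    by (simp flip: powr_add)
  have BA: "Beta a a = Gamma a * Gamma a / Gamma (2*a)" unfolding Beta_def by (simp only: mult_2)
  have BH: "Beta a (1/2) = Gamma a * sqrt pi / Gamma (a + 1/2)" unfolding Beta_def Gamma_one_half_real ..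
  have g: "Gamma (a + 1/2) > 0" "Gamma (2*a) > 0" using assms by auto
  have gen: "\<And>Q P G1 G2 G3 r::real. G1 * G2 = P * r * G3 \<Longrightarrow> Q * P = 2 \<Longrightarrow> G2 > 0 \<Longrightarrow> G3 > 0 \<Longrightarrow>
      Q * (G1 * G1 / G3) = 2 * (G1 * r / G2)"
  proof -
    fix Q P G1 G2 G3 r :: real
    assume h: "G1 * G2 = P * r * G3" "Q * P = 2" "G2 > 0" "G3 > 0"
    have "Q * (G1 * G1 / G3) * G2 * G3 = Q * G1 * (G1 * G2)" using h(4) by (simp add: field_simps)
    also have "\<dots> = (Q * P) * G1 * r * G3" using h(1) by (simp add: algebra_simps)
    also have "\<dots> = 2 * (G1 * r / G2) * G2 * G3" using h(2,3) by (simp add: field_simps)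
    finally have "(Q * (G1 * G1 / G3)) * (G2 * G3) = (2 * (G1 * r / G2)) * (G2 * G3)"
      by (simp only: mult.assoc)
    moreover have "G2 * G3 \<noteq> 0" using h(3,4) by simp
    ultimately show "Q * (G1 * G1 / G3) = 2 * (G1 * r / G2)" by (rule mult_right_cancel[THEN iffD1, rotated])
  qed
  show ?thesis unfolding BA BH by (rule gen[OF L PQ g])
qed



lemma zeta_pow_q: "q > 0 \<Longrightarrow> zeta q ^ q = 1"
proof -
  assume q: "q > 0"
  have "zeta q ^ q = exp (of_nat q * (2 * of_real pi * \<i> / of_nat q))"
    unfolding zeta_def by (rule exp_of_nat_mult[symmetric])
  also have "of_nat q * (2 * of_real pi * \<i> / of_nat q) = 2 * of_real pi * \<i>" using q by simp
  finally show ?thesis by simp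
qed

lemma gamma_fst_A: "t \<le> 1/2 \<Longrightarrow> fst (gamma_path q k t) = complex_of_real ((1 - sqrt (1 - (2*t)^q))/2)"
  by (simp add: gamma_path_def zw_to_xy_def gamma_zw_def)

lemma gamma_fst_B: "t > 1/2 \<Longrightarrow> fst (gamma_path q k t) = complex_of_real ((1 + sqrt (1 - (2 - 2*t)^q))/2)"
  by (simp add: gamma_path_def zw_to_xy_def gamma_zw_def)

lemma gamma_snd_A: "t \<le> 1/2 \<Longrightarrow> snd (gamma_path q k t) = zeta q ^ k * complex_of_real (2*t) / complex_of_real (root q 4)"
  by (simp add: gamma_path_def zw_to_xy_def gamma_zw_def)

lemma gamma_snd_B: "t > 1/2 \<Longrightarrow> snd (gamma_path q k t) = zeta q ^ k * complex_of_real (2 - 2*t) / complex_of_real (root q 4)"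
  by (simp add: gamma_path_def zw_to_xy_def gamma_zw_def)

lemma pow_lt1: "0 \<le> (x::real) \<Longrightarrow> x < 1 \<Longrightarrow> q > 0 \<Longrightarrow> x^q < 1"
  using power_strict_mono[of x 1 q] by simp

lemma dsqrt: "(y::real) > 0 \<Longrightarrow> ((\<lambda>s::real. f s) has_real_derivative D) (at t) \<Longrightarrow> f t = y \<Longrightarrow> ((\<lambda>s. sqrt (f s)) has_real_derivative D / (2 * sqrt y)) (at t)"
  apply (rule DERIV_cong[OF DERIV_chain2[OF DERIV_real_sqrt]])
  apply auto
  apply (simp add: divide_inverse)
  done

lemma dpowA: "q = Suc m \<Longrightarrow> ((\<lambda>s::real. 1 - (2 * s)^q) has_real_derivative -(real q * (2*t)^m * 2)) (at t)"
  apply (rule derivative_eq_intros refl)+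
  apply (simp add: algebra_simps)
  done
lemma dpowB: "q = Suc m \<Longrightarrow> ((\<lambda>s::real. 1 - (2 - 2 * s)^q) has_real_derivative (real q * (2-2*t)^m * 2)) (at t)"
  apply (rule derivative_eq_intros refl)+
  apply (simp add: algebra_simps)
  done

definition Dq :: "nat \<Rightarrow> real \<Rightarrow> real" where
  "Dq q s = real q * s^(q-1) / (2 * sqrt (1 - s^q))"

lemma derA:
  assumes "0 < t" "t < 1/2" "q > 0"
  shows "((\<lambda>s. fst (gamma_path q k s)) has_vector_derivative complex_of_real (Dq q (2*t))) (at t)"
proof -
  obtain m where m: "q = Suc m" using assms(3) gr0_implies_Suc by blast
  have lt: "(2*t)^q < 1" using assms by (intro pow_lt1) auto
  have d: "((\<lambda>s. sqrt (1 - (2 * s)^q)) has_real_derivative -(real q * (2*t)^m * 2) / (2 * sqrt (1 - (2*t)^q))) (at t)"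
    by (rule dsqrt[OF _ dpowA[OF m]]) (use lt in auto)
  have d2: "((\<lambda>s. (1 - sqrt (1 - (2 * s)^q)) / 2) has_real_derivative Dq q (2*t)) (at t)"
  proof -
    have "((\<lambda>s. (1 - sqrt (1 - (2 * s)^q)) / 2) has_real_derivative
           (0 - (-(real q * (2*t)^m * 2) / (2 * sqrt (1 - (2*t)^q)))) / 2) (at t)"
      by (intro DERIV_cdivide DERIV_diff DERIV_const d)
    moreover have "(0 - (-(real q * (2*t)^m * 2) / (2 * sqrt (1 - (2*t)^q)))) / 2 = Dq q (2*t)"
      unfolding Dq_def m by simp
    ultimately show ?thesis by simp
  qed
  have d3: "((\<lambda>s. complex_of_real ((1 - sqrt (1 - (2 * s)^q)) / 2)) has_vector_derivative complex_of_real (Dq q (2*t))) (at t)"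
    by (rule has_vector_derivative_of_real[OF d2])
  show ?thesis
    by (rule has_vector_derivative_transform_within_open[OF d3, of "{..<1/2}"])
       (use assms in \<open>auto simp: gamma_fst_A\<close>)
qed

lemma derB:
  assumes "1/2 < t" "t < 1" "q > 0"
  shows "((\<lambda>s. fst (gamma_path q k s)) has_vector_derivative complex_of_real (Dq q (2 - 2*t))) (at t)"
proof -
  obtain m where m: "q = Suc m" using assms(3) gr0_implies_Suc by blast
  have lt: "(2 - 2*t)^q < 1" using assms by (intro pow_lt1) auto
  have d: "((\<lambda>s. sqrt (1 - (2 - 2 * s)^q)) has_real_derivative (real q * (2-2*t)^m * 2) / (2 * sqrt (1 - (2-2*t)^q))) (at t)"
    by (rule dsqrt[OF _ dpowB[OF m]]) (use lt in auto)
  have d2: "((\<lambda>s. (1 + sqrt (1 - (2 - 2 * s)^q)) / 2) has_real_derivative Dq q (2 - 2*t)) (at t)"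
  proof -
    have "((\<lambda>s. (1 + sqrt (1 - (2 - 2 * s)^q)) / 2) has_real_derivative
           (0 + ((real q * (2-2*t)^m * 2) / (2 * sqrt (1 - (2-2*t)^q)))) / 2) (at t)"
      by (intro DERIV_cdivide DERIV_add DERIV_const d)
    moreover have "(0 + ((real q * (2-2*t)^m * 2) / (2 * sqrt (1 - (2-2*t)^q)))) / 2 = Dq q (2 - 2*t)"
      unfolding Dq_def m by simp
    ultimately show ?thesis by simp
  qed
  have d3: "((\<lambda>s. complex_of_real ((1 + sqrt (1 - (2 - 2 * s)^q)) / 2)) has_vector_derivative complex_of_real (Dq q (2 - 2*t))) (at t)"
    by (rule has_vector_derivative_of_real[OF d2])
  show ?thesis
    by (rule has_vector_derivative_transform_within_open[OF d3, of "{1/2<..}"])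
       (use assms in \<open>auto simp: gamma_fst_B\<close>)
qed



lemma pt_identity:
  fixes s c Bt :: real and Z :: complex
  assumes "0 < s" "s < 1" "c > 0" "Bt > 0" "1 \<le> i" "i < q" "Z ^ q = 1"
  shows "1 / ((Z^k * complex_of_real s / complex_of_real c)^(q-i) * complex_of_real Bt) * complex_of_real (Dq q s)
       = Z^(k*i) * complex_of_real (c^(q-i) * real q / (2*Bt)) * complex_of_real (s^(i-1) / sqrt (1 - s^q))"
proof -
  have Z0: "Z \<noteq> 0" using assms(7) assms(6) by (metis gr_implies_not0 power_0_left zero_neq_one)
  have ZZ: "Z^(k*(q-i)) * Z^(k*i) = 1"
  proof -
    have "Z^(k*(q-i)) * Z^(k*i) = Z^(k*q)" using assms(6) by (simp flip: power_add add_mult_distrib2)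
    also have "\<dots> = (Z^q)^k" by (metis power_mult mult.commute)
    finally show ?thesis using assms(7) by simp
  qed
  hence inv: "1 / Z^(k*(q-i)) = Z^(k*i)" using Z0 by (simp add: field_simps)
  have pw: "(Z^k * complex_of_real s / complex_of_real c)^(q-i) = Z^(k*(q-i)) * complex_of_real ((s/c)^(q-i))"
    by (simp add: power_mult_distrib power_divide power_mult)
  have sp: "s^(q-1) = s^(q-i) * s^(i-1)"
  proof -
    have "q - 1 = (q-i) + (i-1)" using assms by simp
    thus ?thesis by (simp flip: power_add)
  qed
  have real: "Dq q s / ((s/c)^(q-i) * Bt) = c^(q-i) * real q / (2*Bt) * (s^(i-1) / sqrt (1 - s^q))"
    unfolding Dq_def sp using assms by (simp add: field_simps power_divide)
  have "1 / ((Z^k * complex_of_real s / complex_of_real c)^(q-i) * complex_of_real Bt) * complex_of_real (Dq q s)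
      = (1 / Z^(k*(q-i))) * complex_of_real (Dq q s / ((s/c)^(q-i) * Bt))"
    unfolding pw by (simp add: field_simps)
  also have "\<dots> = Z^(k*i) * complex_of_real (c^(q-i) * real q / (2*Bt)) * complex_of_real (s^(i-1) / sqrt (1 - s^q))"
    unfolding inv real by (simp add: mult.assoc)
  finally show ?thesis .
qed

lemma const_identity:
  assumes "1 \<le> i" "i < q"
  shows "root q 4 ^ (q-i) * real q / (2 * Beta (real i/q) (real i/q)) * (Beta (real i/q) (1/2) / real q) = 1"
proof -
  define a where "a = real i / real q"
  define c where "c = root q 4"
  have q0: "q > 0" using assms by simp
  have a0: "a > 0" using assms by (simp add: a_def)
  have Bt0: "Beta a a > 0" unfolding Beta_def using a0 by (intro divide_pos_pos mult_pos_pos Gamma_real_pos) auto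
  have cq: "c^(q-i) * c^i = 4"
  proof -
    have "c^(q-i) * c^i = c^q" using assms by (simp flip: power_add)
    thus ?thesis using q0 by (simp add: c_def)
  qed
  have ci: "c^i = 2 powr (2*a)"
  proof -
    have "c = 4 powr (1/q)" using q0 by (simp add: c_def root_powr_inverse)
    hence "c^i = 4 powr (1/q * i)" by (simp add: powr_realpow[symmetric] powr_powr)
    also have "1/q * i = a" by (simp add: a_def)
    also have "(4::real) powr a = (2 powr 2) powr a" by simp
    also have "\<dots> = 2 powr (2*a)" by (simp only: powr_powr)
    finally show ?thesis .
  qed
  have bi: "2 powr (2*a) * Beta a a = 2 * Beta a (1/2)" by (rule beta_identity[OF a0])
  have "c^(q-i) * Beta a (1/2) = 2 * Beta a a"
  proof -
    have "c^(q-i) * Beta a (1/2) * 2 = c^(q-i) * (c^i * Beta a a)" using bi ci by simp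
    also have "\<dots> = 4 * Beta a a" using cq by (simp add: mult.assoc[symmetric])
    finally show ?thesis by simp
  qed
  thus ?thesis using q0 Bt0 by (simp add: a_def[symmetric] c_def[symmetric] field_simps)
qed

lemma gamma_good:
  assumes "1 \<le> i" "i < q"
  shows "good (omega q i) (gamma_path q k) (zeta q ^ (k*i))"
proof -
  define c where "c = root q 4"
  define Bt where "Bt = Beta (real i/q) (real i/q)"
  define J where "J = Beta (real i/q) (1/2) / real q"
  define H where "H = (\<lambda>s::real. s^(i-1) / sqrt (1 - s^q))"
  define Kc where "Kc = zeta q ^ (k*i) * complex_of_real (c^(q-i) * real q / (2*Bt))"
  have q0: "q > 0" using assms by simp
  have c0: "c > 0" using q0 by (simp add: c_def real_root_gt_zero)
  have Bt0: "Bt > 0" unfolding Bt_def Beta_def using assms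
    by (intro divide_pos_pos mult_pos_pos Gamma_real_pos) auto
  have Zq: "zeta q ^ q = 1" using zeta_pow_q[OF q0] .
  have KJ: "Kc * complex_of_real J = zeta q ^ (k*i)"
  proof -
    have "c^(q-i) * real q / (2*Bt) * J = 1" unfolding c_def Bt_def J_def by (rule const_identity[OF assms])
    hence "complex_of_real (c^(q-i) * real q / (2*Bt)) * complex_of_real J = 1"
      by (metis of_real_1 of_real_mult)
    thus ?thesis unfolding Kc_def by (simp add: mult.assoc)
  qed
  have hK: "(H has_integral J) {0..1}" unfolding H_def J_def by (rule K_integral[OF assms])
  have hKc: "((\<lambda>s. complex_of_real (H s)) has_integral complex_of_real J) {0..1}"
    by (rule has_integral_of_real[OF hK])
  have iA: "((\<lambda>t. complex_of_real (H (2 * t + 0))) has_integral (1/2) *\<^sub>R complex_of_real J) {0..1/2}"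
  proof -
    have "(\<lambda>x::real. x / 2 - 0 / 2) ` {0..1} = {0..1/2}"
      using image_affinity_atLeastAtMost[of "1/2" 0 0 1] by (simp add: algebra_simps)
    thus ?thesis using aff_int[OF hKc, of 2 0] by simp
  qed
  have iB: "((\<lambda>t. complex_of_real (H (-2 * t + 2))) has_integral (1/2) *\<^sub>R complex_of_real J) {1/2..1}"
  proof -
    have "(\<lambda>x::real. x / -2 - 2 / -2) ` {0..1} = {1/2..1}"
      using image_affinity_atLeastAtMost[of "-1/2" 1 0 1] by (simp add: algebra_simps)
    thus ?thesis using aff_int[OF hKc, of "-2" 2] by simp
  qed
  let ?F = "\<lambda>t. omega q i (gamma_path q k t) * vector_derivative (\<lambda>s. fst (gamma_path q k s)) (at t)"
  have FA: "?F t = Kc * complex_of_real (H (2 * t + 0))" if t: "0 < t" "t < 1/2" for t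
  proof -
    have vd: "vector_derivative (\<lambda>s. fst (gamma_path q k s)) (at t) = complex_of_real (Dq q (2*t))"
      by (rule vector_derivative_at[OF derA[OF t q0]])
    have "?F t = 1 / ((zeta q ^ k * complex_of_real (2*t) / complex_of_real c)^(q-i) * complex_of_real Bt) * complex_of_real (Dq q (2*t))"
      unfolding vd omega_def using t by (simp add: gamma_snd_A c_def Bt_def)
    also have "\<dots> = Kc * complex_of_real (H (2*t))"
      unfolding Kc_def H_def by (rule pt_identity) (use t c0 Bt0 assms Zq in auto)
    finally show ?thesis by simp
  qed
  have FB: "?F t = Kc * complex_of_real (H (-2 * t + 2))" if t: "1/2 < t" "t < 1" for t
  proof -
    have vd: "vector_derivative (\<lambda>s. fst (gamma_path q k s)) (at t) = complex_of_real (Dq q (2 - 2*t))"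
      by (rule vector_derivative_at[OF derB[OF t q0]])
    have "?F t = 1 / ((zeta q ^ k * complex_of_real (2 - 2*t) / complex_of_real c)^(q-i) * complex_of_real Bt) * complex_of_real (Dq q (2 - 2*t))"
      unfolding vd omega_def using t by (simp add: gamma_snd_B c_def Bt_def)
    also have "\<dots> = Kc * complex_of_real (H (2 - 2*t))"
      unfolding Kc_def H_def by (rule pt_identity) (use t c0 Bt0 assms Zq in auto)
    finally show ?thesis by simp
  qed
  have IA: "(?F has_integral Kc * ((1/2) *\<^sub>R complex_of_real J)) {0..1/2}"
  proof (rule has_integral_spike_finite[of "{0, 1/2}"])
    show "finite {0::real, 1/2}" by simp
    show "((\<lambda>t. Kc * complex_of_real (H (2 * t + 0))) has_integral Kc * ((1/2) *\<^sub>R complex_of_real J)) {0..1/2}"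
      by (rule has_integral_mult_right[OF iA])
    fix t :: real assume "t \<in> {0..1/2} - {0, 1/2}"
    thus "?F t = Kc * complex_of_real (H (2 * t + 0))" using FA by auto
  qed
  have IB: "(?F has_integral Kc * ((1/2) *\<^sub>R complex_of_real J)) {1/2..1}"
  proof (rule has_integral_spike_finite[of "{1/2, 1}"])
    show "finite {1/2::real, 1}" by simp
    show "((\<lambda>t. Kc * complex_of_real (H (-2 * t + 2))) has_integral Kc * ((1/2) *\<^sub>R complex_of_real J)) {1/2..1}"
      by (rule has_integral_mult_right[OF iB])
    fix t :: real assume "t \<in> {1/2..1} - {1/2, 1}"
    thus "?F t = Kc * complex_of_real (H (-2 * t + 2))" using FB by auto
  qed
  have I: "(?F has_integral zeta q ^ (k*i)) {0..1}"
  proof -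
    have "(?F has_integral Kc * ((1/2) *\<^sub>R complex_of_real J) + Kc * ((1/2) *\<^sub>R complex_of_real J)) {0..1}"
      by (rule has_integral_combine[OF _ _ IA IB]) auto
    moreover have "Kc * ((1/2) *\<^sub>R complex_of_real J) + Kc * ((1/2) *\<^sub>R complex_of_real J) = Kc * complex_of_real J"
      by (simp add: scaleR_conv_of_real algebra_simps)
    ultimately show ?thesis using KJ by simp
  qed
  show ?thesis unfolding good_def
  proof (intro conjI exI[of _ "{1/2}"])
    show "finite {1/2::real}" by simp
    show "\<forall>t\<in>{0<..<1} - {1/2}. (\<lambda>s. fst (gamma_path q k s)) differentiable at t"
    proof
      fix t :: real assume t: "t \<in> {0<..<1} - {1/2}"
      show "(\<lambda>s. fst (gamma_path q k s)) differentiable at t"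
      proof (cases "t < 1/2")
        case True thus ?thesis using derA[of t q k] t q0 differentiable_def has_vector_derivative_def by fastforce
      next
        case False
        hence "t > 1/2" using t by auto
        thus ?thesis using derB[of t q k] t q0 differentiable_def has_vector_derivative_def by fastforce
      qed
    qed
    show "(?F has_integral zeta q ^ (k*i)) {0..1}" by (rule I)
  qed
qed



lemma loop_good:
  assumes "1 \<le> i" "i < q"
  shows "good (omega q i) (loop_path q a b) (zeta q ^ (a*i) - zeta q ^ (b*i))"
  unfolding loop_path_def using good_join[OF gamma_good[OF assms] good_reverse[OF gamma_good[OF assms]]]
  by simp

lemma B_good:
  assumes "1 \<le> i" "i < q"
  shows "good (omega q i) (B_path q (Suc n)) (\<Sum>m=0..n. zeta q ^ ((2*m+1)*i) - zeta q ^ ((2*m)*i))"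
proof (induction n)
  case 0
  show ?case using loop_good[OF assms, of 1 0] by simp
next
  case (Suc n)
  have "good (omega q i) (B_path q (Suc (Suc n)))
     ((zeta q ^ ((2*n+3)*i) - zeta q ^ ((2*n+2)*i)) + (\<Sum>m=0..n. zeta q ^ ((2*m+1)*i) - zeta q ^ ((2*m)*i)))"
    unfolding B_path.simps by (rule good_join[OF loop_good[OF assms] Suc.IH])
  moreover have "(zeta q ^ ((2*n+3)*i) - zeta q ^ ((2*n+2)*i)) + (\<Sum>m=0..n. zeta q ^ ((2*m+1)*i) - zeta q ^ ((2*m)*i))
     = (\<Sum>m=0..Suc n. zeta q ^ ((2*m+1)*i) - zeta q ^ ((2*m)*i))"
    by (simp add: add.commute add_mult_distrib)
  ultimately show ?case by metis
qed

lemma good_dx: "good f p I \<Longrightarrow> dx_integral f p = I"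
  unfolding good_def dx_integral_def using integral_unique by blast

theorem mainTheorem8:
  fixes g :: nat
  assumes "g \<ge> 2"
  defines "q \<equiv> 2 * g + 1"
  shows "\<forall>i\<in>{1..g}. \<forall>j\<in>{1..g}.
           dx_integral (omega q i) (A_path q j)
             = - ((-1 + zeta q ^ i) * zeta q ^ i * zeta q ^ (2 * i * (j - 1)))
         \<and> dx_integral (omega q i) (B_path q j)
             = (-1 + zeta q ^ i) * (\<Sum>k = 0..j - 1. zeta q ^ (2 * i * k))"
proof (intro ballI conjI)
  fix i j assume i: "i \<in> {1..g}" and j: "j \<in> {1..g}"
  have ia: "1 \<le> i" "i < q" using i unfolding q_def by auto
  obtain n where n: "j = Suc n" using j by (cases j) auto
  define Z where "Z = zeta q"
  have A: "dx_integral (omega q i) (A_path q j) = Z ^ ((2*j-1)*i) - Z ^ ((2*j)*i)"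
    unfolding A_path_def Z_def by (rule good_dx[OF loop_good[OF ia]])
  have e1: "Z ^ ((2*j-1)*i) = Z^i * Z ^ (2*i*(j-1))"
    unfolding n by (simp add: algebra_simps flip: power_add)
  have e2: "Z ^ ((2*j)*i) = Z^i * Z^i * Z ^ (2*i*(j-1))"
    unfolding n by (simp add: algebra_simps flip: power_add)
  show "dx_integral (omega q i) (A_path q j) = - ((-1 + zeta q ^ i) * zeta q ^ i * zeta q ^ (2 * i * (j - 1)))"
    unfolding A e1 e2 Z_def[symmetric] by (simp add: algebra_simps)
  have B: "dx_integral (omega q i) (B_path q j) = (\<Sum>m=0..n. Z ^ ((2*m+1)*i) - Z ^ ((2*m)*i))"
    unfolding n Z_def by (rule good_dx[OF B_good[OF ia]])
  have "(\<Sum>m=0..n. Z ^ ((2*m+1)*i) - Z ^ ((2*m)*i)) = (\<Sum>m=0..n. (-1 + Z^i) * Z ^ (2*i*m))"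
  proof (rule sum.cong[OF refl])
    fix m
    have "Z ^ ((2*m+1)*i) = Z^i * Z^(2*i*m)" by (simp add: algebra_simps flip: power_add)
    moreover have "Z ^ ((2*m)*i) = Z^(2*i*m)" by (simp add: algebra_simps)
    ultimately show "Z ^ ((2*m+1)*i) - Z ^ ((2*m)*i) = (-1 + Z^i) * Z ^ (2*i*m)"
      by (simp add: algebra_simps)
  qed
  also have "\<dots> = (-1 + Z^i) * (\<Sum>k = 0..j - 1. Z ^ (2 * i * k))"
    unfolding n by (simp add: sum_distrib_left)
  finally show "dx_integral (omega q i) (B_path q j) = (-1 + zeta q ^ i) * (\<Sum>k = 0..j - 1. zeta q ^ (2 * i * k))"
    unfolding B Z_def .
qed


end
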